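(* Let $k$ be a field with $w:=\operatorname{char}k$, $X$ a normal $k$-variety, $U=\operatorname{Spec}B\subset X$ an affine open subset, and $V$ a prime divisor with $V\cap U=\operatorname{div}(g)$ for some $g\in B$. Let $D$ be a $\mathbb{Q}$-divisor with $D|_U=\frac pq (V\cap U)$, $p,q$ coprime, $q>0$; let $d\in\mathbb{Z}$ and $s:=\lfloor pd/q\rfloor$. Then with $\varphi_U(f)=fT^d\cdot T\partial_T$ and $\psi_U(\delta)=\sigma_\delta$ there are short exact sequences of $\mathcal{O}_U$-modules as follows. If $pd\equiv-1\pmod q$ and $w\nmid q$: $0\to\mathcal{O}_U(sV)\xrightarrow{\varphi_U}(\pi_*\Theta_C)_d|_U\xrightarrow{\psi_U}\Theta_U(sV)\to0$. If $pd\equiv-1\pmod q$ and $w\mid q$: $0\to\mathcal{O}_U(sV+V)\xrightarrow{\varphi_U}(\pi_*\Theta_C)_d|_U\xrightarrow{\psi_U}\mathcal{D}er_U(-\log V)(sV)\to0$. Otherwise: $0\to\mathcal{O}_U(sV)\xrightarrow{\varphi_U}(\pi_*\Theta_C)_d|_U\xrightarrow{\psi_U}\mathcal{D}er_U(-\log V)(sV)\to0$.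
   Context: For integers, "$w\mid q$" means $q\in w\mathbb{Z}$ (never true when $w=0$). For a $\mathbb{Q}$-divisor $S$, $\mathcal{O}_X(S):=\mathcal{O}_X(\lfloor S\rfloor)$. $T$ is an indeterminate, $\mathcal{A}:=\bigoplus_{i\in\mathbb{Z}}\mathcal{O}_X(iD)T^i$ (on $U$ this is $\bigoplus_iBg^{-\lfloor pi/q\rfloor}T^i$), $\pi:C=\operatorname{Spec}_X\mathcal{A}\to X$, $\Theta_C=\mathcal{D}er_k(\mathcal{O}_C)$, and $(\pi_*\Theta_C)_d$ is the sheaf of $k$-derivations of $\mathcal{A}$ mapping $\mathcal{O}_X(iD)T^i$ into $\mathcal{O}_X((i+d)D)T^{i+d}$. Each such $\delta$ extends to $K(X)(T)$ and $T^{-d}\delta=\sigma_\delta+\alpha_\delta T\partial_T$ uniquely with $\alpha_\delta\in K(X)$, $\sigma_\delta$ a $k$-derivation of $K(X)$ (with $\sigma_\delta(T)=0$). $\Theta_U(sV)=\mathcal{D}er_k(\mathcal{O}_U)\otimes\mathcal{O}_U(sV)$ and $\mathcal{D}er_U(-\log V)(sV)=\mathcal{D}er_U(-\log V)\otimes\mathcal{O}_U(sV)$, where $\mathcal{D}er_U(-\log V)$ is the sheaf of $k$-derivations $\theta$ of $\mathcal{O}_U$ with $\theta(g\mathcal{O}_U)\subset g\mathcal{O}_U$. *)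

theory Defs
  imports "HOL-Computational_Algebra.Polynomial"
begin

text \<open>The function field K(X) is the ambient field type 'a; k is a subfield kk,
  B is the coordinate ring of U (a subring of 'a with fraction field 'a).\<close>

definition is_subfield :: "'a::field set \<Rightarrow> bool" where
  "is_subfield F \<longleftrightarrow> 0 \<in> F \<and> 1 \<in> F \<and>
     (\<forall>x\<in>F. \<forall>y\<in>F. x + y \<in> F \<and> x * y \<in> F \<and> - x \<in> F) \<and>
     (\<forall>x\<in>F. x \<noteq> 0 \<longrightarrow> inverse x \<in> F)"

definition is_subring :: "'a::field set \<Rightarrow> bool" where
  "is_subring R \<longleftrightarrow> 0 \<in> R \<and> 1 \<in> R \<and>
     (\<forall>x\<in>R. \<forall>y\<in>R. x + y \<in> R \<and> x * y \<in> R \<and> - x \<in> R)"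

inductive_set alg_gen :: "'a::field set \<Rightarrow> 'a set \<Rightarrow> 'a set" for F S where
  base: "x \<in> F \<Longrightarrow> x \<in> alg_gen F S"
| gen: "x \<in> S \<Longrightarrow> x \<in> alg_gen F S"
| add: "x \<in> alg_gen F S \<Longrightarrow> y \<in> alg_gen F S \<Longrightarrow> x + y \<in> alg_gen F S"
| mult: "x \<in> alg_gen F S \<Longrightarrow> y \<in> alg_gen F S \<Longrightarrow> x * y \<in> alg_gen F S"
| neg: "x \<in> alg_gen F S \<Longrightarrow> - x \<in> alg_gen F S"

text \<open>U = Spec B is an affine open of a normal k-variety with function field 'a:
  B is a finitely generated k-algebra, a domain with fraction field 'a, integrally closed.\<close>
definition normal_affine_chart :: "'a::field set \<Rightarrow> 'a set \<Rightarrow> bool" where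
  "normal_affine_chart kk B \<longleftrightarrow>
     is_subfield kk \<and> is_subring B \<and> kk \<subseteq> B \<and>
     (\<exists>S. finite S \<and> S \<subseteq> B \<and> B = alg_gen kk S) \<and>
     (\<forall>x. \<exists>a\<in>B. \<exists>b\<in>B. b \<noteq> 0 \<and> x = a / b) \<and>
     (\<forall>x. (\<exists>P. lead_coeff P = 1 \<and> (\<forall>i. coeff P i \<in> B) \<and> poly P x = 0) \<longrightarrow> x \<in> B)"

text \<open>div(g) = V \<inter> U for a prime divisor V (in the normal domain B): g B is a prime ideal
  (or, if V does not meet U, g is a unit).\<close>
definition div_is_prime_divisor :: "'a::field set \<Rightarrow> 'a \<Rightarrow> bool" where
  "div_is_prime_divisor B g \<longleftrightarrow> g \<in> B \<and> g \<noteq> 0 \<and>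
     ((\<exists>u\<in>B. g * u = 1) \<or>
      ((\<nexists>u. u \<in> B \<and> g * u = 1) \<and>
       (\<forall>a\<in>B. \<forall>b\<in>B. (\<exists>c\<in>B. a * b = g * c) \<longrightarrow> (\<exists>c\<in>B. a = g * c) \<or> (\<exists>c\<in>B. b = g * c))))"

text \<open>Sections of O_U(mV) = g^(-m) B.\<close>
definition Osec :: "'a::field set \<Rightarrow> 'a \<Rightarrow> int \<Rightarrow> 'a set" where
  "Osec B g m = {x. x * g powi m \<in> B}"

definition flr :: "int \<Rightarrow> int \<Rightarrow> int \<Rightarrow> int" where
  "flr p q i = \<lfloor>(of_int (p * i) / of_int q :: rat)\<rfloor>"

text \<open>Elements of K(X)[T,T^-1] as finitely supported coefficient functions.\<close>
definition lsingle :: "int \<Rightarrow> 'a::field \<Rightarrow> int \<Rightarrow> 'a" where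
  "lsingle i x = (\<lambda>n. if n = i then x else 0)"

definition lmul :: "(int \<Rightarrow> 'a::field) \<Rightarrow> (int \<Rightarrow> 'a) \<Rightarrow> int \<Rightarrow> 'a" where
  "lmul a b = (\<lambda>n. \<Sum>i\<in>{i. a i \<noteq> 0}. a i * b (n - i))"

text \<open>A on U: the graded ring \<Oplus>_i B g^(-floor(p i/q)) T^i.\<close>
definition AU :: "'a::field set \<Rightarrow> 'a \<Rightarrow> int \<Rightarrow> int \<Rightarrow> (int \<Rightarrow> 'a) set" where
  "AU B g p q = {a. finite {i. a i \<noteq> 0} \<and> (\<forall>i. a i \<in> Osec B g (flr p q i))}"

text \<open>(\<pi>_* \<Theta>_C)_d (U): degree-d k-derivations of A_U (extended by 0 outside A_U).\<close>
definition DerA :: "'a::field set \<Rightarrow> 'a set \<Rightarrow> 'a \<Rightarrow> int \<Rightarrow> int \<Rightarrow> int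
     \<Rightarrow> ((int \<Rightarrow> 'a) \<Rightarrow> (int \<Rightarrow> 'a)) set" where
  "DerA kk B g p q d = {\<delta>. (\<forall>a. a \<notin> AU B g p q \<longrightarrow> \<delta> a = (\<lambda>_. 0)) \<and>
      (\<forall>a\<in>AU B g p q. \<delta> a \<in> AU B g p q) \<and>
      (\<forall>a\<in>AU B g p q. \<forall>b\<in>AU B g p q. \<delta> (\<lambda>n. a n + b n) = (\<lambda>n. \<delta> a n + \<delta> b n) \<and>
           \<delta> (lmul a b) = (\<lambda>n. lmul a (\<delta> b) n + lmul (\<delta> a) b n)) \<and>
      (\<forall>c\<in>kk. \<forall>a\<in>AU B g p q. \<delta> (\<lambda>n. c * a n) = (\<lambda>n. c * \<delta> a n)) \<and>
      (\<forall>i x. lsingle i x \<in> AU B g p q \<longrightarrow> (\<forall>n. n \<noteq> i + d \<longrightarrow> \<delta> (lsingle i x) n = 0))}"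

text \<open>Der_k(O_U)(U) and Der_U(-log V)(U), as maps 'a \<Rightarrow> 'a extended by 0 outside B.\<close>
definition DerB :: "'a::field set \<Rightarrow> 'a set \<Rightarrow> ('a \<Rightarrow> 'a) set" where
  "DerB kk B = {\<theta>. (\<forall>x. x \<notin> B \<longrightarrow> \<theta> x = 0) \<and> (\<forall>x\<in>B. \<theta> x \<in> B) \<and>
      (\<forall>x\<in>B. \<forall>y\<in>B. \<theta> (x + y) = \<theta> x + \<theta> y \<and> \<theta> (x * y) = x * \<theta> y + \<theta> x * y) \<and>
      (\<forall>c\<in>kk. \<forall>x\<in>B. \<theta> (c * x) = c * \<theta> x)}"

definition DerLogB :: "'a::field set \<Rightarrow> 'a set \<Rightarrow> 'a \<Rightarrow> ('a \<Rightarrow> 'a) set" where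
  "DerLogB kk B g = {\<theta>\<in>DerB kk B. \<forall>x\<in>B. \<exists>c\<in>B. \<theta> (g * x) = g * c}"

text \<open>Twist by O_U(sV) = g^(-s) O_U (a free O_U-module with generator g^(-s)).\<close>
definition twist :: "'a::field \<Rightarrow> int \<Rightarrow> ('a \<Rightarrow> 'a) set \<Rightarrow> ('a \<Rightarrow> 'a) set" where
  "twist g s M = (\<lambda>\<theta> x. g powi (- s) * \<theta> x) ` M"

text \<open>\<phi>_U(f) = f T^d \<cdot> T \<partial>_T and \<psi>_U(\<delta>) = \<sigma>_\<delta> (restricted to B; it determines \<sigma>_\<delta>).\<close>
definition phiU :: "'a::field set \<Rightarrow> 'a \<Rightarrow> int \<Rightarrow> int \<Rightarrow> int \<Rightarrow> 'a \<Rightarrow> (int \<Rightarrow> 'a) \<Rightarrow> int \<Rightarrow> 'a" where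
  "phiU B g p q d f = (\<lambda>a. if a \<in> AU B g p q then (\<lambda>n. f * of_int (n - d) * a (n - d))
                            else (\<lambda>_. 0))"

definition psiU :: "'a::field set \<Rightarrow> int \<Rightarrow> ((int \<Rightarrow> 'a) \<Rightarrow> (int \<Rightarrow> 'a)) \<Rightarrow> 'a \<Rightarrow> 'a" where
  "psiU B d \<delta> = (\<lambda>b. if b \<in> B then \<delta> (lsingle 0 b) d else 0)"

definition short_exact :: "'a::field set \<Rightarrow> 'a set \<Rightarrow> ((int \<Rightarrow> 'a) \<Rightarrow> (int \<Rightarrow> 'a)) set
     \<Rightarrow> ('a \<Rightarrow> 'a) set \<Rightarrow> ('a \<Rightarrow> ((int \<Rightarrow> 'a) \<Rightarrow> (int \<Rightarrow> 'a)))
     \<Rightarrow> (((int \<Rightarrow> 'a) \<Rightarrow> (int \<Rightarrow> 'a)) \<Rightarrow> ('a \<Rightarrow> 'a)) \<Rightarrow> bool" where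
  "short_exact B M1 M2 M3 \<phi> \<psi> \<longleftrightarrow>
     (\<forall>f\<in>M1. \<phi> f \<in> M2) \<and> (\<forall>\<delta>\<in>M2. \<psi> \<delta> \<in> M3) \<and>
     (\<forall>b\<in>B. \<forall>f\<in>M1. \<forall>f'\<in>M1. \<phi> (f + f') = (\<lambda>a n. \<phi> f a n + \<phi> f' a n) \<and>
          \<phi> (b * f) = (\<lambda>a n. b * \<phi> f a n)) \<and>
     (\<forall>b\<in>B. \<forall>\<delta>\<in>M2. \<forall>\<delta>'\<in>M2. \<psi> (\<lambda>a n. \<delta> a n + \<delta>' a n) = (\<lambda>x. \<psi> \<delta> x + \<psi> \<delta>' x) \<and>
          \<psi> (\<lambda>a n. b * \<delta> a n) = (\<lambda>x. b * \<psi> \<delta> x)) \<and>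
     inj_on \<phi> M1 \<and>
     \<phi> ` M1 = {\<delta>\<in>M2. \<psi> \<delta> = (\<lambda>_. 0)} \<and>
     \<psi> ` M2 = M3"

end

theory Submission
  imports Defs
begin


lemma additive_int:
  fixes F :: "int \<Rightarrow> 'a::field"
  assumes F: "\<And>i j. F (i + j) = F i + F j"
  shows "F k = of_int k * F 1"
proof -
  have F0: "F 0 = 0" using F[of 0 0] by (metis add_0 add_cancel_right_right)
  have nat: "F (int n) = of_nat n * F 1" for n
  proof (induction n)
    case 0 then show ?case using F0 by simp
  next
    case (Suc n)
    have "F (int (Suc n)) = F (1 + int n)" by simp
    also have "\<dots> = F 1 + F (int n)" by (rule F)
    finally show ?case using Suc by (simp add: algebra_simps)
  qed
  show ?thesis
  proof (cases "k \<ge> 0")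
    case True
    then show ?thesis using nat[of "nat k"] by simp
  next
    case False
    have "F (- k + k) = F (- k) + F k" by (rule F)
    then have "F k = - F (- k)" using F0 by (simp add: eq_neg_iff_add_eq_0 add.commute)
    then show ?thesis using nat[of "nat (- k)"] False by simp
  qed
qed

locale stp =
  fixes kk B :: "'a::field set" and g :: 'a and p q d :: int
  assumes sf: "is_subfield kk" and sr: "is_subring B" and kB: "kk \<subseteq> B"
    and gB: "g \<in> B" and g0: "g \<noteq> 0" and qpos: "q > 0"
begin

abbreviation m where "m k \<equiv> flr p q k"
abbreviation A where "A k \<equiv> Osec B g (flr p q k)"

lemma m_def: "m k = p * k div q"
  unfolding flr_def by (rule floor_divide_of_int_eq)

lemma B0: "0 \<in> B" and B1: "1 \<in> B" and Badd: "x \<in> B \<Longrightarrow> y \<in> B \<Longrightarrow> x + y \<in> B"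
  and Bmult: "x \<in> B \<Longrightarrow> y \<in> B \<Longrightarrow> x * y \<in> B" and Bneg: "x \<in> B \<Longrightarrow> - x \<in> B"
  using sr unfolding is_subring_def by auto

lemma Bdiff: "x \<in> B \<Longrightarrow> y \<in> B \<Longrightarrow> x - y \<in> B"
  using Badd Bneg by (metis diff_conv_add_uminus)

lemma kk0: "0 \<in> kk" and kk1: "1 \<in> kk" and kkadd: "x \<in> kk \<Longrightarrow> y \<in> kk \<Longrightarrow> x + y \<in> kk"
  and kkneg: "x \<in> kk \<Longrightarrow> - x \<in> kk" and kkinv: "x \<in> kk \<Longrightarrow> inverse x \<in> kk"
  using sf unfolding is_subfield_def by auto

lemma kk_of_nat: "of_nat n \<in> kk"
  by (induction n) (auto intro: kkadd kk0 kk1 simp: add.commute)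

lemma kk_of_int: "of_int n \<in> kk"
proof -
  have "of_int n = (if n \<ge> 0 then of_nat (nat n) else - of_nat (nat (- n)) :: 'a)"
    by (cases "n \<ge> 0") simp_all
  moreover have "of_nat (nat n) \<in> kk" "- of_nat (nat (- n)) \<in> kk"
    using kk_of_nat kkneg by auto
  ultimately show ?thesis by (cases "n \<ge> 0") (simp only: if_True if_False, simp)+
qed

lemma B_of_int: "of_int n \<in> B" using kk_of_int kB by auto

lemma B_inv_of_int: "inverse (of_int n) \<in> B" using kk_of_int kkinv kB by auto

lemma B_gpow_nat: "g ^ n \<in> B"
  by (induction n) (auto intro: Bmult B1 gB)

lemma B_gpow: "n \<ge> 0 \<Longrightarrow> g powi n \<in> B"
  by (simp add: power_int_nonneg_exp B_gpow_nat)

lemma B_sum: "finite S \<Longrightarrow> (\<And>i. i \<in> S \<Longrightarrow> f i \<in> B) \<Longrightarrow> sum f S \<in> B"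
  by (induction S rule: finite_induct) (auto intro: Badd B0)

lemma gpow_add: "g powi (a + b) = g powi a * g powi b"
  using g0 by (simp add: power_int_add)

lemma gpow_nz: "g powi a \<noteq> 0" using g0 by simp

lemma Osec_mult: "x \<in> Osec B g a \<Longrightarrow> y \<in> Osec B g b \<Longrightarrow> a + b \<le> c \<Longrightarrow> x * y \<in> Osec B g c"
proof -
  assume x: "x \<in> Osec B g a" and y: "y \<in> Osec B g b" and c: "a + b \<le> c"
  have e1: "x * y * g powi c = (x * g powi a) * (y * g powi b) * g powi (c - a - b)"
    using gpow_add[of a "b + (c - a - b)"] gpow_add[of b "c - a - b"] by (simp add: ac_simps)
  have e2: "(x * g powi a) * (y * g powi b) * g powi (c - a - b) \<in> B"
  proof (rule Bmult[OF Bmult B_gpow])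
    show "x * g powi a \<in> B" "y * g powi b \<in> B" using x y by (auto simp: Osec_def)
    show "0 \<le> c - a - b" using c by simp
  qed
  show ?thesis unfolding Osec_def mem_Collect_eq e1 by (rule e2)
qed

lemma Osec_mono: "x \<in> Osec B g a \<Longrightarrow> a \<le> c \<Longrightarrow> x \<in> Osec B g c"
  using Osec_mult[of x a 1 0 c] B1 by (simp add: Osec_def)

lemma Osec_B: "x \<in> B \<Longrightarrow> x \<in> Osec B g 0" by (simp add: Osec_def)

lemma Osec_add: "x \<in> Osec B g a \<Longrightarrow> y \<in> Osec B g a \<Longrightarrow> x + y \<in> Osec B g a"
  by (simp add: Osec_def distrib_right Badd)

lemma Osec_0: "0 \<in> Osec B g a" by (simp add: Osec_def B0)

lemma Osec_sum: "finite S \<Longrightarrow> (\<And>i. i \<in> S \<Longrightarrow> f i \<in> Osec B g a) \<Longrightarrow> sum f S \<in> Osec B g a"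
  by (induction S rule: finite_induct) (auto intro: Osec_add Osec_0)

lemma m0: "m 0 = 0" by (simp add: m_def)

lemma m_super: "m i + m j \<le> m (i + j)"
proof -
  have "(p * i + p * j) div q = p * i div q + p * j div q + (p * i mod q + p * j mod q) div q"
    by (rule div_add1_eq)
  moreover have "(p * i mod q + p * j mod q) div q \<ge> 0"
    using qpos by (simp add: pos_imp_zdiv_nonneg_iff)
  ultimately show ?thesis by (simp add: m_def distrib_left)
qed


lemma m_d_le: "m k + m d \<le> m (k + d)" by (rule m_super)

definition e where "e k = g powi (- m k)"

lemma e_g: "e k * g powi (m k) = 1" using g0 by (simp add: e_def power_int_minus field_simps)

lemma e_nz: "e k \<noteq> 0" using g0 by (simp add: e_def)

lemma AU_iff: "a \<in> AU B g p q \<longleftrightarrow> finite {i. a i \<noteq> 0} \<and> (\<forall>i. a i \<in> A i)"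
  by (simp add: AU_def)

lemma lsingle_AU: "lsingle i x \<in> AU B g p q \<longleftrightarrow> x \<in> A i"
proof
  assume "lsingle i x \<in> AU B g p q"
  then show "x \<in> A i" unfolding AU_iff by (metis lsingle_def)
next
  assume x: "x \<in> A i"
  have "{n. lsingle i x n \<noteq> 0} \<subseteq> {i}" by (auto simp: lsingle_def split: if_splits)
  then have "finite {n. lsingle i x n \<noteq> 0}" by (rule finite_subset) simp
  moreover have "\<forall>n. lsingle i x n \<in> A n" using x Osec_0 by (simp add: lsingle_def)
  ultimately show "lsingle i x \<in> AU B g p q" by (simp add: AU_iff)
qed

lemma lmul_lsingle: "lmul (lsingle i x) b = (\<lambda>n. x * b (n - i))"
proof
  fix n
  show "lmul (lsingle i x) b n = x * b (n - i)"
  proof (cases "x = 0")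
    case True
    then show ?thesis by (simp add: lmul_def lsingle_def)
  next
    case False
    then have "{j. lsingle i x j \<noteq> 0} = {i}" by (auto simp: lsingle_def split: if_splits)
    then show ?thesis by (simp add: lmul_def lsingle_def)
  qed
qed

lemma lsingle_mult: "lmul (lsingle i x) (lsingle j y) = lsingle (i + j) (x * y)"
  unfolding lmul_lsingle by (auto simp: lsingle_def fun_eq_iff)

lemma AU_add: "a \<in> AU B g p q \<Longrightarrow> b \<in> AU B g p q \<Longrightarrow> (\<lambda>n. a n + b n) \<in> AU B g p q"
proof -
  assume a: "a \<in> AU B g p q" and b: "b \<in> AU B g p q"
  have "{n. a n + b n \<noteq> 0} \<subseteq> {n. a n \<noteq> 0} \<union> {n. b n \<noteq> 0}" by auto
  then have "finite {n. a n + b n \<noteq> 0}" using a b by (auto simp: AU_iff intro: finite_subset)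
  then show ?thesis using a b by (auto simp: AU_iff intro: Osec_add)
qed

lemma kk_Osec: "c \<in> kk \<Longrightarrow> x \<in> Osec B g a \<Longrightarrow> c * x \<in> Osec B g a"
  using Osec_mult[of c 0 x a a] Osec_B[of c] kB by auto

lemma AU_scal: "c \<in> kk \<Longrightarrow> a \<in> AU B g p q \<Longrightarrow> (\<lambda>n. c * a n) \<in> AU B g p q"
proof -
  assume c: "c \<in> kk" and a: "a \<in> AU B g p q"
  have "{n. c * a n \<noteq> 0} \<subseteq> {n. a n \<noteq> 0}" by auto
  then have "finite {n. c * a n \<noteq> 0}" using a by (auto simp: AU_iff intro: finite_subset)
  then show ?thesis using a c by (auto simp: AU_iff intro: kk_Osec)
qed

lemma AU_lmul: "a \<in> AU B g p q \<Longrightarrow> b \<in> AU B g p q \<Longrightarrow> lmul a b \<in> AU B g p q"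
proof -
  assume a: "a \<in> AU B g p q" and b: "b \<in> AU B g p q"
  let ?Sa = "{n. a n \<noteq> 0}" and ?Sb = "{n. b n \<noteq> 0}"
  have fa: "finite ?Sa" and fb: "finite ?Sb" using a b by (auto simp: AU_iff)
  have "{n. lmul a b n \<noteq> 0} \<subseteq> (\<lambda>(i, j). i + j) ` (?Sa \<times> ?Sb)"
  proof
    fix n assume "n \<in> {n. lmul a b n \<noteq> 0}"
    then have "(\<Sum>i\<in>?Sa. a i * b (n - i)) \<noteq> 0" by (simp add: lmul_def)
    then obtain i where "i \<in> ?Sa" "a i * b (n - i) \<noteq> 0" by (meson sum.neutral)
    then show "n \<in> (\<lambda>(i, j). i + j) ` (?Sa \<times> ?Sb)"
      by (intro image_eqI[of _ _ "(i, n - i)"]) auto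
  qed
  then have "finite {n. lmul a b n \<noteq> 0}" using fa fb by (auto intro: finite_subset)
  moreover have "lmul a b n \<in> A n" for n
    unfolding lmul_def
  proof (rule Osec_sum[OF fa])
    fix i
    show "a i * b (n - i) \<in> A n"
      using a b m_super[of i "n - i"] by (intro Osec_mult) (auto simp: AU_iff)
  qed
  ultimately show ?thesis by (simp add: AU_iff)
qed


definition isder :: "('a \<Rightarrow> 'a) \<Rightarrow> bool" where
  "isder \<sigma> \<longleftrightarrow> (\<forall>x\<in>B. \<forall>y\<in>B. \<sigma> (x + y) = \<sigma> x + \<sigma> y \<and> \<sigma> (x * y) = x * \<sigma> y + \<sigma> x * y) \<and>
     (\<forall>c\<in>kk. \<forall>x\<in>B. \<sigma> (c * x) = c * \<sigma> x)"

definition Dform :: "('a \<Rightarrow> 'a) \<Rightarrow> 'a \<Rightarrow> int \<Rightarrow> 'a \<Rightarrow> 'a" where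
  "Dform \<sigma> \<alpha> k x = e k * \<sigma> (x * g powi (m k)) + x * (of_int k * \<alpha> - of_int (m k) * (\<sigma> g / g))"

lemma isder_add: "isder \<sigma> \<Longrightarrow> x \<in> B \<Longrightarrow> y \<in> B \<Longrightarrow> \<sigma> (x + y) = \<sigma> x + \<sigma> y"
  and isder_mult: "isder \<sigma> \<Longrightarrow> x \<in> B \<Longrightarrow> y \<in> B \<Longrightarrow> \<sigma> (x * y) = x * \<sigma> y + \<sigma> x * y"
  and isder_scal: "isder \<sigma> \<Longrightarrow> c \<in> kk \<Longrightarrow> x \<in> B \<Longrightarrow> \<sigma> (c * x) = c * \<sigma> x"
  by (auto simp: isder_def)

lemma isder_0: "isder \<sigma> \<Longrightarrow> \<sigma> 0 = 0"
proof -
  assume s: "isder \<sigma>"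
  have "\<sigma> 0 + \<sigma> 0 = \<sigma> 0 + 0" using isder_add[OF s B0 B0] by simp
  then show ?thesis by (rule add_left_cancel[THEN iffD1])
qed

lemma isder_1: "isder \<sigma> \<Longrightarrow> \<sigma> 1 = 0"
proof -
  assume s: "isder \<sigma>"
  have "\<sigma> 1 + \<sigma> 1 = \<sigma> 1 + 0" using isder_mult[OF s B1 B1] by simp
  then show ?thesis by (rule add_left_cancel[THEN iffD1])
qed

lemma isder_gpow: "isder \<sigma> \<Longrightarrow> \<sigma> (g ^ n) = of_nat n * g ^ n * (\<sigma> g / g)"
proof (induction n)
  case 0 then show ?case by (simp add: isder_1)
next
  case (Suc n)
  have "\<sigma> (g ^ Suc n) = \<sigma> (g * g ^ n)" by simp
  also have "\<dots> = g * \<sigma> (g ^ n) + \<sigma> g * g ^ n" using Suc.prems gB B_gpow_nat by (rule isder_mult)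
  also have "\<dots> = of_nat (Suc n) * g ^ Suc n * (\<sigma> g / g)" using Suc g0 by (simp add: field_simps)
  finally show ?case .
qed

lemma Dform_mult:
  assumes s: "isder \<sigma>" and x: "x \<in> A i" and y: "y \<in> A j"
  shows "Dform \<sigma> \<alpha> (i + j) (x * y) = x * Dform \<sigma> \<alpha> j y + Dform \<sigma> \<alpha> i x * y"
proof -
  define X where "X = x * g powi (m i)"
  define Y where "Y = y * g powi (m j)"
  define K where "K = nat (m (i + j) - m i - m j)"
  define \<gamma> where "\<gamma> = \<sigma> g / g"
  have XB: "X \<in> B" and YB: "Y \<in> B" using x y by (auto simp: X_def Y_def Osec_def)
  have K: "int K = m (i + j) - m i - m j" using m_super[of i j] by (simp add: K_def)
  have gsplit: "g powi m (i + j) = g powi m i * g powi m j * g ^ K"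
  proof -
    have "g powi m (i + j) = g powi (m i + (m j + int K))" using K by simp
    also have "\<dots> = g powi m i * g powi m j * g powi (int K)" by (simp add: gpow_add mult.assoc)
    finally show ?thesis by simp
  qed
  have xy: "x * y * g powi m (i + j) = X * Y * g ^ K" by (simp add: gsplit X_def Y_def ac_simps)
  have eK: "e (i + j) * g ^ K = e i * e j"
  proof -
    have "e (i + j) * g ^ K = g powi (- m (i + j) + int K)" by (simp only: e_def gpow_add power_int_of_nat)
    also have "- m (i + j) + int K = - m i + - m j" using K by simp
    finally show ?thesis by (simp only: e_def gpow_add)
  qed
  have ex: "e i * X = x" and ey: "e j * Y = y" using e_g[of i] e_g[of j]
    by (simp_all add: X_def Y_def ac_simps)
  have sXYg: "\<sigma> (X * Y * g ^ K) = (X * \<sigma> Y + \<sigma> X * Y) * g ^ K + X * Y * (of_nat K * g ^ K * \<gamma>)"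
    using isder_mult[OF s Bmult[OF XB YB] B_gpow_nat[of K]] isder_mult[OF s XB YB] isder_gpow[OF s, of K]
    by (simp add: \<gamma>_def)
  have "Dform \<sigma> \<alpha> (i + j) (x * y) = e (i + j) * g ^ K * (X * \<sigma> Y + \<sigma> X * Y + X * Y * of_nat K * \<gamma>)
      + x * y * (of_int (i + j) * \<alpha> - of_int (m (i + j)) * \<gamma>)"
    unfolding Dform_def xy sXYg \<gamma>_def[symmetric] by (simp add: algebra_simps)
  also have "\<dots> = (e j * Y) * (e i * \<sigma> X) * 0 + x * (e j * \<sigma> Y) + (e i * \<sigma> X) * y + x * y * of_nat K * \<gamma>
      + x * y * (of_int (i + j) * \<alpha> - of_int (m (i + j)) * \<gamma>)"
    unfolding eK by (simp add: ex[symmetric] ey[symmetric] algebra_simps)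
  also have "\<dots> = x * Dform \<sigma> \<alpha> j y + Dform \<sigma> \<alpha> i x * y"
  proof -
    have Kof: "(of_int (m (i + j)) :: 'a) = of_nat K + of_int (m i) + of_int (m j)"
      using arg_cong[OF K, of "of_int :: int \<Rightarrow> 'a"] by simp
    show ?thesis unfolding Dform_def X_def[symmetric] Y_def[symmetric] \<gamma>_def[symmetric] Kof
      by (simp add: algebra_simps)
  qed
  finally show ?thesis .
qed


lemma Dform_add: "isder \<sigma> \<Longrightarrow> x \<in> A k \<Longrightarrow> y \<in> A k \<Longrightarrow> Dform \<sigma> \<alpha> k (x + y) = Dform \<sigma> \<alpha> k x + Dform \<sigma> \<alpha> k y"
  unfolding Dform_def distrib_right
  by (subst isder_add) (auto simp: Osec_def algebra_simps)

lemma Dform_0: "isder \<sigma> \<Longrightarrow> Dform \<sigma> \<alpha> k 0 = 0"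
  by (simp add: Dform_def isder_0)

lemma Dform_scal: "isder \<sigma> \<Longrightarrow> c \<in> kk \<Longrightarrow> x \<in> A k \<Longrightarrow> Dform \<sigma> \<alpha> k (c * x) = c * Dform \<sigma> \<alpha> k x"
  unfolding Dform_def mult.assoc
  by (subst isder_scal) (auto simp: Osec_def algebra_simps)

lemma Dform_sum:
  assumes s: "isder \<sigma>" and fS: "finite S" and f: "\<And>i. i \<in> S \<Longrightarrow> f i \<in> A k"
  shows "Dform \<sigma> \<alpha> k (sum f S) = (\<Sum>i\<in>S. Dform \<sigma> \<alpha> k (f i))"
  using fS f
proof (induction S rule: finite_induct)
  case empty then show ?case by (simp add: Dform_0[OF s])
next
  case (insert a S)
  then show ?case by (simp add: Dform_add[OF s] Osec_sum)
qed

lemma supp_sum: "finite T \<Longrightarrow> {j. f j \<noteq> 0} \<subseteq> T \<Longrightarrow>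
   (\<Sum>j\<in>{j. f j \<noteq> 0}. f j * c j) = (\<Sum>j\<in>T. f j * (c j :: 'a))"
  by (rule sum.mono_neutral_left) auto

definition dform :: "('a \<Rightarrow> 'a) \<Rightarrow> 'a \<Rightarrow> (int \<Rightarrow> 'a) \<Rightarrow> int \<Rightarrow> 'a" where
  "dform \<sigma> \<alpha> = (\<lambda>a. if a \<in> AU B g p q then (\<lambda>n. Dform \<sigma> \<alpha> (n - d) (a (n - d))) else (\<lambda>_. 0))"

definition Cnd :: "('a \<Rightarrow> 'a) \<Rightarrow> 'a \<Rightarrow> bool" where
  "Cnd \<sigma> \<alpha> \<longleftrightarrow> (\<forall>k x. x \<in> A k \<longrightarrow> Dform \<sigma> \<alpha> k x \<in> A (k + d))"

lemma dform_DerA: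
  assumes s: "isder \<sigma>" and C: "Cnd \<sigma> \<alpha>"
  shows "dform \<sigma> \<alpha> \<in> DerA kk B g p q d"
proof -
  let ?\<delta> = "dform \<sigma> \<alpha>"
  let ?D = "Dform \<sigma> \<alpha>"
  have in_AU: "?\<delta> a \<in> AU B g p q" if a: "a \<in> AU B g p q" for a
  proof -
    have "{n. ?\<delta> a n \<noteq> 0} \<subseteq> (\<lambda>i. i + d) ` {i. a i \<noteq> 0}"
    proof
      fix n assume "n \<in> {n. ?\<delta> a n \<noteq> 0}"
      then have "a (n - d) \<noteq> 0" using a by (auto simp: dform_def Dform_0[OF s])
      then show "n \<in> (\<lambda>i. i + d) ` {i. a i \<noteq> 0}" by (intro image_eqI[of _ _ "n - d"]) auto
    qed
    then have "finite {n. ?\<delta> a n \<noteq> 0}" using a by (auto simp: AU_iff intro: finite_subset)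
    moreover have "?\<delta> a n \<in> A n" for n
      using C a unfolding Cnd_def by (auto simp: dform_def AU_iff) (metis diff_add_cancel)
    ultimately show ?thesis by (simp add: AU_iff)
  qed
  have lmul_eq: "?\<delta> (lmul a b) = (\<lambda>n. lmul a (?\<delta> b) n + lmul (?\<delta> a) b n)"
    if a: "a \<in> AU B g p q" and b: "b \<in> AU B g p q" for a b
  proof
    fix n
    let ?Sa = "{i. a i \<noteq> 0}"
    have fa: "finite ?Sa" using a by (simp add: AU_iff)
    have ai: "a i \<in> A i" for i using a by (simp add: AU_iff)
    have bi: "b i \<in> A i" for i using b by (simp add: AU_iff)
    have "?\<delta> (lmul a b) n = ?D (n - d) (\<Sum>i\<in>?Sa. a i * b (n - d - i))"
      using AU_lmul[OF a b] by (simp add: dform_def lmul_def)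
    also have "\<dots> = (\<Sum>i\<in>?Sa. ?D (n - d) (a i * b (n - d - i)))"
    proof (rule Dform_sum[OF s fa])
      fix i show "a i * b (n - d - i) \<in> A (n - d)"
        using Osec_mult[OF ai[of i] bi[of "n - d - i"]] m_super[of i "n - d - i"] by simp
    qed
    also have "\<dots> = (\<Sum>i\<in>?Sa. a i * ?D (n - d - i) (b (n - d - i)) + ?D i (a i) * b (n - d - i))"
    proof (rule sum.cong)
      fix i show "?D (n - d) (a i * b (n - d - i)) = a i * ?D (n - d - i) (b (n - d - i)) + ?D i (a i) * b (n - d - i)"
        using Dform_mult[OF s ai[of i] bi[of "n - d - i"], of \<alpha>] by simp
    qed simp
    also have "\<dots> = lmul a (?\<delta> b) n + lmul (?\<delta> a) b n"
    proof -
      have 1: "lmul a (?\<delta> b) n = (\<Sum>i\<in>?Sa. a i * ?D (n - d - i) (b (n - d - i)))"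
        using b by (simp add: lmul_def dform_def algebra_simps)
      have "lmul (?\<delta> a) b n = (\<Sum>j\<in>(\<lambda>i. i + d) ` ?Sa. ?\<delta> a j * b (n - j))"
        unfolding lmul_def
      proof (rule supp_sum)
        show "finite ((\<lambda>i. i + d) ` ?Sa)" using fa by simp
        show "{j. ?\<delta> a j \<noteq> 0} \<subseteq> (\<lambda>i. i + d) ` ?Sa"
        proof
          fix j assume "j \<in> {j. ?\<delta> a j \<noteq> 0}"
          then have "a (j - d) \<noteq> 0" using a by (auto simp: dform_def Dform_0[OF s])
          then show "j \<in> (\<lambda>i. i + d) ` ?Sa" by (intro image_eqI[of _ _ "j - d"]) auto
        qed
      qed
      also have "\<dots> = (\<Sum>i\<in>?Sa. ?D i (a i) * b (n - d - i))"
        by (subst sum.reindex) (auto simp: inj_on_def dform_def a algebra_simps)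
      finally show ?thesis using 1 by (simp add: sum.distrib)
    qed
    finally show "?\<delta> (lmul a b) n = lmul a (?\<delta> b) n + lmul (?\<delta> a) b n" .
  qed
  show ?thesis
    unfolding DerA_def
  proof (intro CollectI conjI allI ballI impI)
    fix a assume "a \<notin> AU B g p q" then show "?\<delta> a = (\<lambda>_. 0)" by (simp add: dform_def)
  next
    fix a assume "a \<in> AU B g p q" then show "?\<delta> a \<in> AU B g p q" by (rule in_AU)
  next
    fix a b assume a: "a \<in> AU B g p q" and b: "b \<in> AU B g p q"
    show "?\<delta> (\<lambda>n. a n + b n) = (\<lambda>n. ?\<delta> a n + ?\<delta> b n)"
      using a b AU_add[OF a b] by (auto simp: dform_def AU_iff Dform_add[OF s] fun_eq_iff)
    show "?\<delta> (lmul a b) = (\<lambda>n. lmul a (?\<delta> b) n + lmul (?\<delta> a) b n)" by (rule lmul_eq[OF a b])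
  next
    fix c a assume c: "c \<in> kk" and a: "a \<in> AU B g p q"
    show "?\<delta> (\<lambda>n. c * a n) = (\<lambda>n. c * ?\<delta> a n)"
      using a c AU_scal[OF c a] by (auto simp: dform_def AU_iff Dform_scal[OF s] fun_eq_iff)
  next
    fix i x n assume "lsingle i x \<in> AU B g p q" and "n \<noteq> i + d"
    then show "?\<delta> (lsingle i x) n = 0" by (auto simp: dform_def lsingle_def Dform_0[OF s])
  qed
qed


definition Dd :: "((int \<Rightarrow> 'a) \<Rightarrow> (int \<Rightarrow> 'a)) \<Rightarrow> int \<Rightarrow> 'a \<Rightarrow> 'a" where
  "Dd \<delta> k x = \<delta> (lsingle k x) (k + d)"

lemma A0_iff: "x \<in> A 0 \<longleftrightarrow> x \<in> B" by (simp add: m0 Osec_def)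

lemma e_A: "e k \<in> A k" using e_g[of k] B1 by (simp add: Osec_def)

lemma zero_AU: "(\<lambda>_. 0) \<in> AU B g p q" by (simp add: AU_iff Osec_0)

lemma lsingle_0: "lsingle k 0 = (\<lambda>_. 0)" by (simp add: lsingle_def fun_eq_iff)

lemma lsingle_add: "(\<lambda>n. lsingle k x n + lsingle k y n) = lsingle k (x + y)"
  by (simp add: lsingle_def fun_eq_iff)

lemma lsingle_scal: "(\<lambda>n. c * lsingle k x n) = lsingle k (c * x)"
  by (simp add: lsingle_def fun_eq_iff)

context
  fixes \<delta> assumes dA: "\<delta> \<in> DerA kk B g p q d"
begin

lemma d_out: "a \<notin> AU B g p q \<Longrightarrow> \<delta> a = (\<lambda>_. 0)" using dA by (simp add: DerA_def)
lemma d_AU: "a \<in> AU B g p q \<Longrightarrow> \<delta> a \<in> AU B g p q" using dA by (simp add: DerA_def)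
lemma d_add: "a \<in> AU B g p q \<Longrightarrow> b \<in> AU B g p q \<Longrightarrow> \<delta> (\<lambda>n. a n + b n) = (\<lambda>n. \<delta> a n + \<delta> b n)"
  using dA by (simp add: DerA_def)
lemma d_lmul: "a \<in> AU B g p q \<Longrightarrow> b \<in> AU B g p q \<Longrightarrow> \<delta> (lmul a b) = (\<lambda>n. lmul a (\<delta> b) n + lmul (\<delta> a) b n)"
  using dA by (simp add: DerA_def)
lemma d_scal: "c \<in> kk \<Longrightarrow> a \<in> AU B g p q \<Longrightarrow> \<delta> (\<lambda>n. c * a n) = (\<lambda>n. c * \<delta> a n)"
  using dA by (simp add: DerA_def)
lemma d_deg: "lsingle i x \<in> AU B g p q \<Longrightarrow> n \<noteq> i + d \<Longrightarrow> \<delta> (lsingle i x) n = 0"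
  using dA by (simp add: DerA_def)

lemma d_zero: "\<delta> (\<lambda>_. 0) = (\<lambda>_. 0)"
proof
  fix n
  have "\<delta> (\<lambda>_. 0) n = \<delta> (\<lambda>_. 0) n + \<delta> (\<lambda>_. 0) n"
    using fun_cong[OF d_add[OF zero_AU zero_AU], of n] by (simp only: add_0_left)
  then show "\<delta> (\<lambda>_. 0) n = 0" by (metis add_cancel_right_right)
qed

lemma Dd_0: "Dd \<delta> k 0 = 0" by (simp add: Dd_def lsingle_0 d_zero)

lemma d_single: "x \<in> A k \<Longrightarrow> \<delta> (lsingle k x) = lsingle (k + d) (Dd \<delta> k x)"
proof
  fix n assume x: "x \<in> A k"
  show "\<delta> (lsingle k x) n = lsingle (k + d) (Dd \<delta> k x) n"
  proof (cases "n = k + d")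
    case True then show ?thesis by (simp add: lsingle_def Dd_def)
  next
    case False then show ?thesis using d_deg[of k x n] x by (simp add: lsingle_AU) (simp add: lsingle_def)
  qed
qed

lemma Dd_A: "x \<in> A k \<Longrightarrow> Dd \<delta> k x \<in> A (k + d)"
  using d_AU[of "lsingle k x"] by (simp add: lsingle_AU d_single)

lemma Dd_mult: "x \<in> A i \<Longrightarrow> y \<in> A j \<Longrightarrow> Dd \<delta> (i + j) (x * y) = x * Dd \<delta> j y + Dd \<delta> i x * y"
proof -
  assume x: "x \<in> A i" and y: "y \<in> A j"
  have "\<delta> (lmul (lsingle i x) (lsingle j y)) (i + j + d) =
     lmul (lsingle i x) (\<delta> (lsingle j y)) (i + j + d) + lmul (\<delta> (lsingle i x)) (lsingle j y) (i + j + d)"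
    using d_lmul[of "lsingle i x" "lsingle j y"] x y by (simp add: lsingle_AU)
  moreover have "lmul (lsingle i x) (\<delta> (lsingle j y)) (i + j + d) = x * Dd \<delta> j y"
    unfolding lmul_lsingle Dd_def by (simp add: add.assoc)
  moreover have "lmul (\<delta> (lsingle i x)) (lsingle j y) (i + j + d) = Dd \<delta> i x * y"
    unfolding d_single[OF x] lmul_lsingle by (simp add: lsingle_def)
  moreover have "\<delta> (lmul (lsingle i x) (lsingle j y)) (i + j + d) = Dd \<delta> (i + j) (x * y)"
    unfolding lsingle_mult Dd_def ..
  ultimately show ?thesis by simp
qed

lemma Dd_add: "x \<in> A k \<Longrightarrow> y \<in> A k \<Longrightarrow> Dd \<delta> k (x + y) = Dd \<delta> k x + Dd \<delta> k y"
  using d_add[of "lsingle k x" "lsingle k y"] by (simp add: lsingle_AU lsingle_add Dd_def)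

lemma Dd_scal: "c \<in> kk \<Longrightarrow> x \<in> A k \<Longrightarrow> Dd \<delta> k (c * x) = c * Dd \<delta> k x"
  using d_scal[of c "lsingle k x"] by (simp add: lsingle_AU lsingle_scal Dd_def)

definition s0 where "s0 = (\<lambda>b. Dd \<delta> 0 b)"

lemma isder_s0: "isder s0"
  unfolding isder_def s0_def
  using Dd_mult[of _ 0 _ 0] Dd_add[of _ 0] Dd_scal[of _ _ 0] kB by (auto simp: A0_iff)


definition E where "E k = Dd \<delta> k (e k) / e k"
definition \<gamma>0 where "\<gamma>0 = s0 g / g"

lemma Dd_repr: "x \<in> A k \<Longrightarrow> Dd \<delta> k x = e k * s0 (x * g powi m k) + x * E k"
proof -
  assume x: "x \<in> A k"
  define b where "b = x * g powi m k"
  have b: "b \<in> A 0" unfolding m0 using x by (simp add: b_def Osec_def)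
  have xb: "x = b * e k" using e_g[of k] by (simp add: b_def ac_simps)
  have EE: "e k * E k = Dd \<delta> k (e k)" using e_nz[of k] by (simp add: E_def)
  have "Dd \<delta> (0 + k) (b * e k) = b * Dd \<delta> k (e k) + Dd \<delta> 0 b * e k" by (rule Dd_mult[OF b e_A])
  then have "Dd \<delta> k x = b * (e k * E k) + e k * s0 b"
    unfolding EE s0_def by (simp add: xb[symmetric] ac_simps)
  also have "\<dots> = e k * s0 b + x * E k" by (simp add: xb ac_simps)
  finally show ?thesis by (simp add: b_def)
qed

lemma eK_lemma: "e (i + j) * g ^ nat (m (i + j) - m i - m j) = e i * e j"
proof -
  define K where "K = nat (m (i + j) - m i - m j)"
  have K: "int K = m (i + j) - m i - m j" using m_super[of i j] by (simp add: K_def)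
  have "e (i + j) * g ^ K = g powi (- m (i + j) + int K)" by (simp only: e_def gpow_add power_int_of_nat)
  also have "- m (i + j) + int K = - m i + - m j" using K by simp
  finally show ?thesis unfolding K_def by (simp only: e_def gpow_add)
qed

lemma E_add: "E (i + j) = E i + E j - of_int (m (i + j) - m i - m j) * \<gamma>0"
proof -
  define K where "K = nat (m (i + j) - m i - m j)"
  have K: "int K = m (i + j) - m i - m j" using m_super[of i j] by (simp add: K_def)
  have eK: "e (i + j) * g ^ K = e i * e j" unfolding K_def by (rule eK_lemma)
  have xA: "e i * e j \<in> A (i + j)" using Osec_mult[OF e_A e_A] m_super by simp
  have gK: "e i * e j * g powi m (i + j) = g ^ K"
    using e_g[of "i + j"] by (simp add: eK[symmetric] ac_simps)
  have "Dd \<delta> (i + j) (e i * e j) = e i * Dd \<delta> j (e j) + Dd \<delta> i (e i) * e j" by (rule Dd_mult[OF e_A e_A])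
  also have "\<dots> = e i * e j * (E i + E j)" using e_nz[of i] e_nz[of j] by (simp add: E_def field_simps)
  finally have 1: "Dd \<delta> (i + j) (e i * e j) = e i * e j * (E i + E j)" .
  have "Dd \<delta> (i + j) (e i * e j) = e (i + j) * s0 (g ^ K) + e i * e j * E (i + j)"
    using Dd_repr[OF xA] gK by simp
  also have "\<dots> = e i * e j * (of_nat K * \<gamma>0 + E (i + j))"
    using isder_gpow[OF isder_s0, of K] eK by (simp add: \<gamma>0_def algebra_simps)
  finally have 2: "Dd \<delta> (i + j) (e i * e j) = e i * e j * (of_nat K * \<gamma>0 + E (i + j))" .
  have "e i * e j * (of_nat K * \<gamma>0 + E (i + j)) = e i * e j * (E i + E j)" using 1 2 by metis
  then have "of_nat K * \<gamma>0 + E (i + j) = E i + E j" using e_nz[of i] e_nz[of j]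
    by (metis mult_cancel_left mult_eq_0_iff)
  moreover have "(of_nat K :: 'a) = of_int (m (i + j) - m i - m j)" using K by (metis of_int_of_nat_eq)
  ultimately show ?thesis by (simp add: algebra_simps)
qed

definition F where "F k = E k + of_int (m k) * \<gamma>0"

lemma F_add: "F (i + j) = F i + F j"
  unfolding F_def E_add by (simp add: algebra_simps)

lemma Dd_Dform: "x \<in> A k \<Longrightarrow> Dd \<delta> k x = Dform s0 (F 1) k x"
proof -
  assume x: "x \<in> A k"
  have Fk: "F k = of_int k * F 1" using additive_int[of F k, OF F_add] .
  have "E k = F k - of_int (m k) * \<gamma>0" by (simp add: F_def)
  then have "E k = of_int k * F 1 - of_int (m k) * \<gamma>0" using Fk by simp
  then show ?thesis using Dd_repr[OF x] by (simp add: Dform_def \<gamma>0_def)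
qed

lemma res_AU: "a \<in> AU B g p q \<Longrightarrow> (\<lambda>n. if n \<in> S then a n else 0) \<in> AU B g p q"
proof -
  assume a: "a \<in> AU B g p q"
  have "{n. (if n \<in> S then a n else 0) \<noteq> 0} \<subseteq> {n. a n \<noteq> 0}" by auto
  then show ?thesis using a by (auto simp: AU_iff Osec_0 intro: finite_subset)
qed

lemma d_res:
  assumes a: "a \<in> AU B g p q" and fS: "finite S"
  shows "\<delta> (\<lambda>n. if n \<in> S then a n else 0) = (\<lambda>n. if n - d \<in> S then Dd \<delta> (n - d) (a (n - d)) else 0)"
  using fS
proof (induction S rule: finite_induct)
  case empty then show ?case by (simp add: d_zero)
next
  case (insert j S)
  have eq: "(\<lambda>n. if n \<in> insert j S then a n else 0) = (\<lambda>n. (if n \<in> S then a n else 0) + lsingle j (a j) n)"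
    using insert(2) by (auto simp: lsingle_def fun_eq_iff)
  have aj: "a j \<in> A j" using a by (simp add: AU_iff)
  have "\<delta> (\<lambda>n. if n \<in> insert j S then a n else 0) = (\<lambda>n. \<delta> (\<lambda>n. if n \<in> S then a n else 0) n + \<delta> (lsingle j (a j)) n)"
    unfolding eq by (rule d_add[OF res_AU[OF a]]) (simp add: lsingle_AU aj)
  also have "\<dots> = (\<lambda>n. if n - d \<in> insert j S then Dd \<delta> (n - d) (a (n - d)) else 0)"
  proof
    fix n
    have ds: "\<delta> (lsingle j (a j)) n = (if n - d = j then Dd \<delta> j (a j) else 0)"
      using d_single[OF aj] by (auto simp: lsingle_def)
    show "\<delta> (\<lambda>n. if n \<in> S then a n else 0) n + \<delta> (lsingle j (a j)) n =
      (if n - d \<in> insert j S then Dd \<delta> (n - d) (a (n - d)) else 0)"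
      unfolding ds fun_cong[OF insert.IH, of n] using insert(2) by auto
  qed
  finally show ?case .
qed

lemma decomp: "\<delta> = dform s0 (F 1)"
proof
  fix a
  show "\<delta> a = dform s0 (F 1) a"
  proof (cases "a \<in> AU B g p q")
    case False then show ?thesis by (simp add: d_out dform_def)
  next
    case True
    let ?S = "{n. a n \<noteq> 0}"
    have fS: "finite ?S" using True by (simp add: AU_iff)
    have "a = (\<lambda>n. if n \<in> ?S then a n else 0)" by auto
    then have "\<delta> a = (\<lambda>n. if n - d \<in> ?S then Dd \<delta> (n - d) (a (n - d)) else 0)"
      using d_res[OF True fS] by metis
    also have "\<dots> = dform s0 (F 1) a"
      using True by (auto simp: dform_def fun_eq_iff Dd_0 Dd_Dform AU_iff Dform_0[OF isder_s0])
    finally show ?thesis .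
  qed
qed

lemma Cnd_s0: "Cnd s0 (F 1)"
  unfolding Cnd_def using Dd_A Dd_Dform by metis


lemma decomp_ex: "\<exists>\<alpha>. \<delta> = dform (\<lambda>b. Dd \<delta> 0 b) \<alpha> \<and> Cnd (\<lambda>b. Dd \<delta> 0 b) \<alpha> \<and> isder (\<lambda>b. Dd \<delta> 0 b)"
  using decomp Cnd_s0 isder_s0 unfolding s0_def by blast

end

lemma psi_dform: "psiU B d (dform \<sigma> \<alpha>) = (\<lambda>b. if b \<in> B then \<sigma> b else 0)"
proof
  fix b
  show "psiU B d (dform \<sigma> \<alpha>) b = (if b \<in> B then \<sigma> b else 0)"
  proof (cases "b \<in> B")
    case True
    then have "lsingle 0 b \<in> AU B g p q" by (simp add: lsingle_AU m0 Osec_def)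
    then show ?thesis using True e_g[of 0]
      by (simp add: psiU_def dform_def Dform_def lsingle_def m0)
  qed (simp add: psiU_def)
qed

lemma Dd_psi: "psiU B d \<delta> = (\<lambda>b. if b \<in> B then Dd \<delta> 0 b else 0)"
  by (simp add: psiU_def Dd_def fun_eq_iff)

lemma phi_dform: "phiU B g p q d f = dform (\<lambda>_. 0) f"
  by (simp add: phiU_def dform_def Dform_def fun_eq_iff algebra_simps)

lemma isder_zero: "isder (\<lambda>_. 0)" by (simp add: isder_def)

lemma Dform_cong: "(\<And>b. b \<in> B \<Longrightarrow> \<sigma> b = \<sigma>' b) \<Longrightarrow> x \<in> A k \<Longrightarrow> Dform \<sigma> \<alpha> k x = Dform \<sigma>' \<alpha> k x"
  using gB by (simp add: Dform_def Osec_def)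

lemma dform_cong: "(\<And>b. b \<in> B \<Longrightarrow> \<sigma> b = \<sigma>' b) \<Longrightarrow> dform \<sigma> \<alpha> = dform \<sigma>' \<alpha>"
  by (auto simp: dform_def fun_eq_iff AU_iff intro!: Dform_cong)

lemma Cnd_cong: "(\<And>b. b \<in> B \<Longrightarrow> \<sigma> b = \<sigma>' b) \<Longrightarrow> Cnd \<sigma> \<alpha> \<Longrightarrow> Cnd \<sigma>' \<alpha>"
  unfolding Cnd_def using Dform_cong by metis

lemma Cnd_h:
  assumes s: "isder \<sigma>" and C: "Cnd \<sigma> \<alpha>"
  shows "(of_int k * \<alpha> - of_int (m k) * (\<sigma> g / g)) * g powi (m (k + d) - m k) \<in> B"
proof -
  have 1: "Dform \<sigma> \<alpha> k (e k) * g powi m (k + d) \<in> B" using C e_A unfolding Cnd_def Osec_def by blast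
  have form2: "Dform \<sigma> \<alpha> k (e k) = e k * (of_int k * \<alpha> - of_int (m k) * (\<sigma> g / g))"
    using e_g[of k] isder_1[OF s] by (simp add: Dform_def)
  have ek: "e k * g powi m (k + d) = g powi (m (k + d) - m k)"
    unfolding e_def by (simp only: gpow_add[symmetric]) simp
  have "Dform \<sigma> \<alpha> k (e k) * g powi m (k + d) = (of_int k * \<alpha> - of_int (m k) * (\<sigma> g / g)) * g powi (m (k + d) - m k)"
    unfolding form2 ek[symmetric] by (simp only: ac_simps)
  then show ?thesis using 1 by simp
qed

lemma Cnd_intro:
  assumes s: "isder \<sigma>" and sB: "\<And>b. b \<in> B \<Longrightarrow> \<sigma> b * g powi m d \<in> B"
    and h: "\<And>k. (of_int k * \<alpha> - of_int (m k) * (\<sigma> g / g)) * g powi (m (k + d) - m k) \<in> B"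
  shows "Cnd \<sigma> \<alpha>"
  unfolding Cnd_def
proof (intro allI impI)
  fix k x assume x: "x \<in> A k"
  define X where "X = x * g powi m k"
  define \<epsilon> where "\<epsilon> = m (k + d) - m k - m d"
  have XB: "X \<in> B" using x by (simp add: X_def Osec_def)
  have eps: "\<epsilon> \<ge> 0" using m_super[of k d] by (simp add: \<epsilon>_def)
  have xX: "x = X * e k" using e_g[of k] by (simp add: X_def ac_simps)
  have ek: "e k * g powi m (k + d) = g powi (m (k + d) - m k)"
    unfolding e_def by (simp only: gpow_add[symmetric]) simp
  have ge: "g powi (m (k + d) - m k) = g powi m d * g powi \<epsilon>"
    unfolding gpow_add[symmetric] by (simp add: \<epsilon>_def)
  have "Dform \<sigma> \<alpha> k x * g powi m (k + d) =
      (\<sigma> X * g powi m d) * g powi \<epsilon> + X * ((of_int k * \<alpha> - of_int (m k) * (\<sigma> g / g)) * g powi (m (k + d) - m k))"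
    unfolding Dform_def X_def[symmetric] using ek ge xX
    by (simp add: algebra_simps)
  also have "\<dots> \<in> B" by (rule Badd[OF Bmult[OF sB[OF XB] B_gpow[OF eps]] Bmult[OF XB h]])
  finally show "Dform \<sigma> \<alpha> k x \<in> A (k + d)" by (simp add: Osec_def)
qed


lemma gs_inv: "g powi (- t) * g powi t = 1" using g0 by (simp add: power_int_minus)

lemma isder_twist: "\<theta> \<in> DerB kk B \<Longrightarrow> isder (\<lambda>x. g powi (- t) * \<theta> x)"
  by (simp add: isder_def DerB_def algebra_simps)

lemma short_exact_intro:
  fixes t :: int and M :: "('a \<Rightarrow> 'a) set"
  assumes MB: "M \<subseteq> DerB kk B"
    and P1: "\<And>f. f \<in> Osec B g t \<Longrightarrow> Cnd (\<lambda>_. 0) f"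
    and P4: "\<And>\<alpha>. Cnd (\<lambda>_. 0) \<alpha> \<Longrightarrow> \<alpha> \<in> Osec B g t"
    and P2: "\<And>\<sigma> \<alpha>. isder \<sigma> \<Longrightarrow> Cnd \<sigma> \<alpha> \<Longrightarrow> (\<lambda>x. if x \<in> B then g powi (m d) * \<sigma> x else 0) \<in> M"
    and P3: "\<And>\<theta>. \<theta> \<in> M \<Longrightarrow> \<exists>\<alpha>. Cnd (\<lambda>x. g powi (- m d) * \<theta> x) \<alpha>"
  shows "short_exact B (Osec B g t) (DerA kk B g p q d) (twist g (m d) M) (phiU B g p q d) (psiU B d)"
proof -
  let ?s = "m d"
  have phiD: "phiU B g p q d f \<in> DerA kk B g p q d" if "f \<in> Osec B g t" for f
    unfolding phi_dform using dform_DerA[OF isder_zero P1[OF that]] .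
  have psiphi: "psiU B d (phiU B g p q d f) = (\<lambda>_. 0)" for f
    unfolding phi_dform psi_dform by simp
  have psiM: "psiU B d \<delta> \<in> twist g ?s M" if dA: "\<delta> \<in> DerA kk B g p q d" for \<delta>
  proof -
    obtain \<alpha> where \<alpha>: "\<delta> = dform (\<lambda>b. Dd \<delta> 0 b) \<alpha>" "Cnd (\<lambda>b. Dd \<delta> 0 b) \<alpha>" "isder (\<lambda>b. Dd \<delta> 0 b)"
      using decomp_ex[OF dA] by blast
    let ?\<theta> = "\<lambda>x. if x \<in> B then g powi ?s * Dd \<delta> 0 x else 0"
    have inM: "?\<theta> \<in> M" using P2[OF \<alpha>(3) \<alpha>(2)] .
    have eq: "psiU B d \<delta> = (\<lambda>x. g powi (- ?s) * ?\<theta> x)"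
      unfolding Dd_psi using gs_inv[of ?s] by (auto simp: fun_eq_iff mult.assoc[symmetric])
    show ?thesis unfolding twist_def by (rule image_eqI[OF _ inM]) (simp only: eq)
  qed
  show ?thesis
    unfolding short_exact_def
  proof (intro conjI ballI)
    fix f assume "f \<in> Osec B g t" then show "phiU B g p q d f \<in> DerA kk B g p q d" by (rule phiD)
  next
    fix \<delta> assume "\<delta> \<in> DerA kk B g p q d" then show "psiU B d \<delta> \<in> twist g ?s M" by (rule psiM)
  next
    fix b f f'
    show "phiU B g p q d (f + f') = (\<lambda>a n. phiU B g p q d f a n + phiU B g p q d f' a n)"
      by (simp add: phiU_def fun_eq_iff algebra_simps)
    show "phiU B g p q d (b * f) = (\<lambda>a n. b * phiU B g p q d f a n)"
      by (simp add: phiU_def fun_eq_iff algebra_simps)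
  next
    fix b \<delta> \<delta>'
    show "psiU B d (\<lambda>a n. \<delta> a n + \<delta>' a n) = (\<lambda>x. psiU B d \<delta> x + psiU B d \<delta>' x)"
      by (simp add: psiU_def fun_eq_iff)
    show "psiU B d (\<lambda>a n. b * \<delta> a n) = (\<lambda>x. b * psiU B d \<delta> x)"
      by (simp add: psiU_def fun_eq_iff)
  next
    show "inj_on (phiU B g p q d) (Osec B g t)"
    proof
      fix f f' assume "phiU B g p q d f = phiU B g p q d f'"
      then have "phiU B g p q d f (lsingle 1 (e 1)) (1 + d) = phiU B g p q d f' (lsingle 1 (e 1)) (1 + d)"
        by simp
      moreover have inAU: "lsingle 1 (e 1) \<in> AU B g p q" using e_A[of 1] by (simp add: lsingle_AU)
      ultimately have "f * e 1 = f' * e 1" by (simp add: phiU_def) (simp add: lsingle_def)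
      then show "f = f'" using e_nz[of 1] by simp
    qed
  next
    show "phiU B g p q d ` Osec B g t = {\<delta> \<in> DerA kk B g p q d. psiU B d \<delta> = (\<lambda>_. 0)}"
    proof (intro equalityI subsetI)
      fix \<delta> assume "\<delta> \<in> phiU B g p q d ` Osec B g t"
      then show "\<delta> \<in> {\<delta> \<in> DerA kk B g p q d. psiU B d \<delta> = (\<lambda>_. 0)}" using phiD psiphi by auto
    next
      fix \<delta> assume "\<delta> \<in> {\<delta> \<in> DerA kk B g p q d. psiU B d \<delta> = (\<lambda>_. 0)}"
      then have dA: "\<delta> \<in> DerA kk B g p q d" and z: "psiU B d \<delta> = (\<lambda>_. 0)" by auto
      obtain \<alpha> where \<alpha>: "\<delta> = dform (\<lambda>b. Dd \<delta> 0 b) \<alpha>" "Cnd (\<lambda>b. Dd \<delta> 0 b) \<alpha>"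
        using decomp_ex[OF dA] by blast
      have zB: "\<And>b. b \<in> B \<Longrightarrow> Dd \<delta> 0 b = 0" using z unfolding Dd_psi by (metis (mono_tags, lifting))
      have "\<delta> = phiU B g p q d \<alpha>" unfolding phi_dform using \<alpha>(1) dform_cong[of "\<lambda>b. Dd \<delta> 0 b" "\<lambda>_. 0"] zB by simp
      moreover have "\<alpha> \<in> Osec B g t" using P4 Cnd_cong[OF _ \<alpha>(2), of "\<lambda>_. 0"] zB by simp
      ultimately show "\<delta> \<in> phiU B g p q d ` Osec B g t" by blast
    qed
  next
    show "psiU B d ` DerA kk B g p q d = twist g ?s M"
    proof (intro equalityI subsetI)
      fix \<theta>' assume "\<theta>' \<in> psiU B d ` DerA kk B g p q d" then show "\<theta>' \<in> twist g ?s M" using psiM by auto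
    next
      fix \<theta>' assume "\<theta>' \<in> twist g ?s M"
      then obtain \<theta> where th: "\<theta> \<in> M" and th': "\<theta>' = (\<lambda>x. g powi (- ?s) * \<theta> x)" unfolding twist_def by auto
      obtain \<alpha> where C: "Cnd (\<lambda>x. g powi (- ?s) * \<theta> x) \<alpha>" using P3[OF th] by blast
      have thB: "\<theta> \<in> DerB kk B" using th MB by auto
      have "dform (\<lambda>x. g powi (- ?s) * \<theta> x) \<alpha> \<in> DerA kk B g p q d"
        using dform_DerA[OF isder_twist[OF thB] C] .
      moreover have "psiU B d (dform (\<lambda>x. g powi (- ?s) * \<theta> x) \<alpha>) = \<theta>'"
        unfolding psi_dform th' using thB by (auto simp: fun_eq_iff DerB_def)
      ultimately show "\<theta>' \<in> psiU B d ` DerA kk B g p q d" by blast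
    qed
  qed
qed


lemma m_add_q: "m (k + q) = m k + p"
  using qpos by (simp add: m_def distrib_left)

lemma m_q: "m q = p" using m_add_q[of 0] by (simp add: m0)

lemma m_shift: "m (k + d) = m k + m d + (if p * k mod q + p * d mod q \<ge> q then 1 else 0)"
proof -
  have "(p * k + p * d) div q = p * k div q + p * d div q + (p * k mod q + p * d mod q) div q"
    by (rule div_add1_eq)
  moreover have "(p * k mod q + p * d mod q) div q = (if p * k mod q + p * d mod q \<ge> q then 1 else 0)"
  proof -
    have a: "0 \<le> p * k mod q" "p * k mod q < q" "0 \<le> p * d mod q" "p * d mod q < q" using qpos by auto
    show ?thesis
    proof (cases "p * k mod q + p * d mod q \<ge> q")
      case True
      let ?x = "p * k mod q + p * d mod q"
      have "?x div q = (?x - q + q) div q" by simp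
      also have "\<dots> = (?x - q) div q + 1" using qpos by (simp only: div_add_self2)
      also have "(?x - q) div q = 0" proof (rule div_pos_pos_trivial)
        show "0 \<le> ?x - q" using True by simp
        show "?x - q < q" using a by linarith
      qed
      finally show ?thesis using True by simp
    next
      case False then show ?thesis using a by (simp add: div_pos_pos_trivial)
    qed
  qed
  ultimately show ?thesis by (simp add: m_def distrib_left)
qed

end


context stp begin

lemma Cnd_zero_intro: "(\<And>k. of_int k * f * g powi (m (k + d) - m k) \<in> B) \<Longrightarrow> Cnd (\<lambda>_. 0) f"
  by (rule Cnd_intro[OF isder_zero]) (simp_all add: B0)

lemma Cnd_zero_h: "Cnd (\<lambda>_. 0) \<alpha> \<Longrightarrow> of_int k * \<alpha> * g powi (m (k + d) - m k) \<in> B"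
  using Cnd_h[OF isder_zero] by simp

lemma gpow_split: "g powi (m (k + d) - m k) = g powi m d * g powi (m (k + d) - m k - m d)"
  unfolding gpow_add[symmetric] by simp

lemma eps_nonneg: "m (k + d) - m k - m d \<ge> 0" using m_super[of k d] by simp

lemma P1_s: "f \<in> Osec B g (m d) \<Longrightarrow> Cnd (\<lambda>_. 0) f"
proof (rule Cnd_zero_intro)
  fix k assume f: "f \<in> Osec B g (m d)"
  have "of_int k * f * g powi (m (k + d) - m k) = of_int k * (f * g powi m d) * g powi (m (k + d) - m k - m d)"
    unfolding gpow_split by (simp add: ac_simps)
  also have "\<dots> \<in> B" by (rule Bmult[OF Bmult[OF B_of_int] B_gpow[OF eps_nonneg]]) (use f in \<open>simp add: Osec_def\<close>)
  finally show "of_int k * f * g powi (m (k + d) - m k) \<in> B" .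
qed

lemma Dform_0k: "isder \<sigma> \<Longrightarrow> Dform \<sigma> \<alpha> 0 b = \<sigma> b"
  using e_g[of 0] by (simp add: Dform_def m0)

lemma sigma_B: "isder \<sigma> \<Longrightarrow> Cnd \<sigma> \<alpha> \<Longrightarrow> b \<in> B \<Longrightarrow> \<sigma> b * g powi m d \<in> B"
proof -
  assume s: "isder \<sigma>" and C: "Cnd \<sigma> \<alpha>" and b: "b \<in> B"
  have "b \<in> A 0" using b by (simp add: m0 Osec_def)
  then have "Dform \<sigma> \<alpha> 0 b \<in> A (0 + d)" using C unfolding Cnd_def by blast
  then show ?thesis using Dform_0k[OF s] by (simp add: Osec_def)
qed

lemma theta_DerB:
  assumes s: "isder \<sigma>" and C: "Cnd \<sigma> \<alpha>"
  shows "(\<lambda>x. if x \<in> B then g powi m d * \<sigma> x else 0) \<in> DerB kk B"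
  unfolding DerB_def
proof (intro CollectI conjI ballI allI impI)
  fix x assume "x \<in> B"
  then show "(if x \<in> B then g powi m d * \<sigma> x else 0) \<in> B" using sigma_B[OF s C] by (simp add: ac_simps)
next
  fix x y assume x: "x \<in> B" and y: "y \<in> B"
  show "(if x + y \<in> B then g powi m d * \<sigma> (x + y) else 0) =
      (if x \<in> B then g powi m d * \<sigma> x else 0) + (if y \<in> B then g powi m d * \<sigma> y else 0)"
    using x y Badd[OF x y] isder_add[OF s x y] by (simp add: algebra_simps)
  show "(if x * y \<in> B then g powi m d * \<sigma> (x * y) else 0) =
      x * (if y \<in> B then g powi m d * \<sigma> y else 0) + (if x \<in> B then g powi m d * \<sigma> x else 0) * y"
    using x y Bmult[OF x y] isder_mult[OF s x y] by (simp add: algebra_simps)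
next
  fix c x assume c: "c \<in> kk" and x: "x \<in> B"
  show "(if c * x \<in> B then g powi m d * \<sigma> (c * x) else 0) = c * (if x \<in> B then g powi m d * \<sigma> x else 0)"
    using c x Bmult[OF _ x, of c] kB isder_scal[OF s c x] by (auto simp: algebra_simps)
qed (simp)

lemma theta_log:
  assumes s: "isder \<sigma>" and C: "Cnd \<sigma> \<alpha>" and gam: "\<sigma> g / g * g powi m d \<in> B"
  shows "(\<lambda>x. if x \<in> B then g powi m d * \<sigma> x else 0) \<in> DerLogB kk B g"
  unfolding DerLogB_def
proof (intro CollectI conjI ballI theta_DerB[OF s C])
  fix x assume x: "x \<in> B"
  let ?c = "g powi m d * \<sigma> x + x * (\<sigma> g / g * g powi m d)"
  have "?c \<in> B" using sigma_B[OF s C x] gam by (intro Badd[OF _ Bmult[OF x]]) (simp_all add: ac_simps)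
  moreover have "(if g * x \<in> B then g powi m d * \<sigma> (g * x) else 0) = g * ?c"
    using Bmult[OF gB x] isder_mult[OF s gB x] g0 by (simp add: field_simps)
  ultimately show "\<exists>c\<in>B. (if g * x \<in> B then g powi m d * \<sigma> (g * x) else 0) = g * c" by blast
qed

lemma log_P3:
  assumes th: "\<theta> \<in> DerLogB kk B g"
  shows "Cnd (\<lambda>x. g powi (- m d) * \<theta> x) 0"
proof -
  have thB: "\<theta> \<in> DerB kk B" using th by (simp add: DerLogB_def)
  obtain c where c: "c \<in> B" "\<theta> (g * 1) = g * c" using th gB B1 unfolding DerLogB_def by blast
  have G: "g powi (- m d) * g powi m d = 1" by (rule gs_inv)
  have gam: "g powi (- m d) * \<theta> g / g * g powi m d = c" using c G g0 by (simp add: field_simps)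
  show ?thesis
  proof (rule Cnd_intro[OF isder_twist[OF thB]])
    fix b assume "b \<in> B"
    then have "\<theta> b \<in> B" using thB by (simp add: DerB_def)
    then show "g powi (- m d) * \<theta> b * g powi m d \<in> B" using G by (simp add: ac_simps)
  next
    fix k
    have "(of_int k * 0 - of_int (m k) * (g powi (- m d) * \<theta> g / g)) * g powi (m (k + d) - m k)
       = - (of_int (m k) * (g powi (- m d) * \<theta> g / g * g powi m d) * g powi (m (k + d) - m k - m d))"
      unfolding gpow_split by (simp add: ac_simps)
    also have "\<dots> \<in> B" unfolding gam by (rule Bneg[OF Bmult[OF Bmult[OF B_of_int c(1)] B_gpow[OF eps_nonneg]]])
    finally show "(of_int k * 0 - of_int (m k) * (g powi (- m d) * \<theta> g / g)) * g powi (m (k + d) - m k) \<in> B" .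
  qed
qed


lemma minus1_mod: "(- 1) mod q = q - 1"
  using qpos by (cases "q = 1") (auto simp: zmod_zminus1_eq_if)

lemma shift_dvd: "q dvd k \<Longrightarrow> m (k + d) - m k = m d"
proof -
  assume "q dvd k"
  then have "p * k mod q = 0" by simp
  moreover have "p * d mod q < q" using qpos by simp
  ultimately show ?thesis using m_shift[of k] by simp
qed

lemma shift_ndvd:
  assumes r: "p * d mod q = q - 1" and cop: "coprime p q" and k: "\<not> q dvd k"
  shows "m (k + d) - m k = m d + 1"
proof -
  have "\<not> q dvd p * k" using k cop coprime_dvd_mult_right_iff[of q p k] by (simp add: coprime_commute)
  then have "p * k mod q \<noteq> 0" by (simp add: dvd_eq_mod_eq_0)
  moreover have "p * k mod q \<ge> 0" using qpos by simp
  ultimately have "p * k mod q + p * d mod q \<ge> q" using r by linarith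
  then show ?thesis using m_shift[of k] by simp
qed

lemma m_dvd: "q dvd k \<Longrightarrow> (of_int (m k) :: 'a) * of_int q = of_int k * of_int p"
proof -
  assume "q dvd k"
  then obtain j where "k = q * j" by blast
  then have "m k = p * j" using qpos by (simp add: m_def)
  then show ?thesis using \<open>k = q * j\<close> by (simp add: algebra_simps)
qed

lemma case1:
  assumes r: "p * d mod q = (- 1) mod q" and ch: "\<not> int CHAR('a) dvd q" and cop: "coprime p q"
  shows "short_exact B (Osec B g (m d)) (DerA kk B g p q d) (twist g (m d) (DerB kk B)) (phiU B g p q d) (psiU B d)"
proof -
  have r': "p * d mod q = q - 1" using r minus1_mod by simp
  have q0: "(of_int q :: 'a) \<noteq> 0" using ch by (simp add: of_int_eq_0_iff_char_dvd)
  show ?thesis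
  proof (rule short_exact_intro)
    show "DerB kk B \<subseteq> DerB kk B" by simp
    show "Cnd (\<lambda>_. 0) f" if "f \<in> Osec B g (m d)" for f using P1_s[OF that] .
  next
    fix \<alpha> assume C: "Cnd (\<lambda>_. 0) \<alpha>"
    have "of_int q * \<alpha> * g powi (m (q + d) - m q) \<in> B" by (rule Cnd_zero_h[OF C])
    moreover have "m (q + d) - m q = m d" using m_add_q[of d] m_q by (simp add: add.commute)
    ultimately have "inverse (of_int q) * (of_int q * \<alpha> * g powi m d) \<in> B"
      by (intro Bmult[OF B_inv_of_int]) simp
    then show "\<alpha> \<in> Osec B g (m d)" using q0 by (simp add: Osec_def field_simps)
  next
    fix \<sigma> \<alpha> assume "isder \<sigma>" "Cnd \<sigma> \<alpha>"
    then show "(\<lambda>x. if x \<in> B then g powi m d * \<sigma> x else 0) \<in> DerB kk B" by (rule theta_DerB)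
  next
    fix \<theta> assume th: "\<theta> \<in> DerB kk B"
    define G where "G = g powi m d"
    have G0: "G \<noteq> 0" using g0 by (simp add: G_def)
    have Gi: "g powi (- m d) = inverse G" by (simp add: G_def power_int_minus)
    have tg: "\<theta> g \<in> B" using th gB by (simp add: DerB_def)
    let ?\<sigma> = "\<lambda>x. g powi (- m d) * \<theta> x"
    let ?\<alpha> = "of_int p / of_int q * (?\<sigma> g / g)"
    have "Cnd ?\<sigma> ?\<alpha>"
    proof (rule Cnd_intro[OF isder_twist[OF th]])
      fix b assume "b \<in> B"
      then have "\<theta> b \<in> B" using th by (simp add: DerB_def)
      then show "g powi (- m d) * \<theta> b * g powi m d \<in> B" using gs_inv[of "m d"] by (simp add: ac_simps)
    next
      fix k
      show "(of_int k * ?\<alpha> - of_int (m k) * (?\<sigma> g / g)) * g powi (m (k + d) - m k) \<in> B"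
      proof (cases "q dvd k")
        case True
        have "of_int k * ?\<alpha> - of_int (m k) * (?\<sigma> g / g) = (of_int k * of_int p - of_int (m k) * of_int q) / of_int q * (?\<sigma> g / g)"
          using q0 g0 by (simp add: field_simps)
        also have "\<dots> = 0" using m_dvd[OF True] by simp
        finally show ?thesis using B0 by simp
      next
        case False
        have e: "g powi (m (k + d) - m k) = G * g" using shift_ndvd[OF r' cop False] by (simp add: G_def gpow_add)
        have "(of_int k * ?\<alpha> - of_int (m k) * (?\<sigma> g / g)) * g powi (m (k + d) - m k)
            = of_int (k * p - m k * q) * inverse (of_int q) * \<theta> g"
          unfolding e Gi using q0 G0 g0 by (simp add: field_simps)
        also have "\<dots> \<in> B" by (rule Bmult[OF Bmult[OF B_of_int B_inv_of_int] tg])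
        finally show ?thesis .
      qed
    qed
    then show "\<exists>\<alpha>. Cnd (\<lambda>x. g powi (- m d) * \<theta> x) \<alpha>" by blast
  qed
qed


lemma case2:
  assumes r: "p * d mod q = (- 1) mod q" and ch: "int CHAR('a) dvd q" and cop: "coprime p q"
  shows "short_exact B (Osec B g (m d + 1)) (DerA kk B g p q d) (twist g (m d) (DerLogB kk B g)) (phiU B g p q d) (psiU B d)"
proof -
  have r': "p * d mod q = q - 1" using r minus1_mod by simp
  have q0: "(of_int q :: 'a) = 0" using ch by (simp add: of_int_eq_0_iff_char_dvd)
  have p0: "(of_int p :: 'a) \<noteq> 0"
  proof
    assume "(of_int p :: 'a) = 0"
    then have "int CHAR('a) dvd p" by (simp add: of_int_eq_0_iff_char_dvd)
    then have "int CHAR('a) dvd gcd p q" using ch by simp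
    then have "int CHAR('a) dvd 1" using cop by simp
    then show False by simp
  qed
  have q1: "\<not> q dvd 1"
  proof
    assume "q dvd 1"
    then have "int CHAR('a) dvd 1" using ch by (rule dvd_trans[rotated])
    then show False by simp
  qed
  show ?thesis
  proof (rule short_exact_intro)
    show "DerLogB kk B g \<subseteq> DerB kk B" by (auto simp: DerLogB_def)
  next
    fix f assume f: "f \<in> Osec B g (m d + 1)"
    show "Cnd (\<lambda>_. 0) f"
    proof (rule Cnd_zero_intro)
      fix k
      show "of_int k * f * g powi (m (k + d) - m k) \<in> B"
      proof (cases "q dvd k")
        case True
        then have "int CHAR('a) dvd k" using ch by (metis dvd_trans)
        then have "(of_int k :: 'a) = 0" by (simp add: of_int_eq_0_iff_char_dvd)
        then show ?thesis using B0 by simp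
      next
        case False
        then have "m (k + d) - m k = m d + 1" by (rule shift_ndvd[OF r' cop])
        then show ?thesis using f by (simp add: Osec_def mult.assoc B_of_int Bmult)
      qed
    qed
  next
    fix \<alpha> assume C: "Cnd (\<lambda>_. 0) \<alpha>"
    have "of_int 1 * \<alpha> * g powi (m (1 + d) - m 1) \<in> B" by (rule Cnd_zero_h[OF C])
    then show "\<alpha> \<in> Osec B g (m d + 1)" using shift_ndvd[OF r' cop q1] by (simp add: Osec_def)
  next
    fix \<sigma> \<alpha> assume s: "isder \<sigma>" and C: "Cnd \<sigma> \<alpha>"
    have "(of_int q * \<alpha> - of_int (m q) * (\<sigma> g / g)) * g powi (m (q + d) - m q) \<in> B"
      by (rule Cnd_h[OF s C])
    moreover have "m (q + d) - m q = m d" using m_add_q[of d] m_q by (simp add: add.commute)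
    ultimately have "- (of_int p * (\<sigma> g / g) * g powi m d) \<in> B" using q0 m_q by simp
    then have "- inverse (of_int p) * (- (of_int p * (\<sigma> g / g) * g powi m d)) \<in> B"
      by (intro Bmult[OF Bneg[OF B_inv_of_int]])
    then have "\<sigma> g / g * g powi m d \<in> B" using p0 by (simp add: field_simps)
    then show "(\<lambda>x. if x \<in> B then g powi m d * \<sigma> x else 0) \<in> DerLogB kk B g" by (rule theta_log[OF s C])
  next
    fix \<theta> assume "\<theta> \<in> DerLogB kk B g"
    then show "\<exists>\<alpha>. Cnd (\<lambda>x. g powi (- m d) * \<theta> x) \<alpha>" using log_P3 by blast
  qed
qed

lemma case3:
  assumes r: "\<not> p * d mod q = (- 1) mod q" and cop: "coprime p q"
  shows "short_exact B (Osec B g (m d)) (DerA kk B g p q d) (twist g (m d) (DerLogB kk B g)) (phiU B g p q d) (psiU B d)"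
proof -
  have r': "p * d mod q \<noteq> q - 1" using r minus1_mod by simp
  have q1: "q \<noteq> 1" using r by auto
  obtain u v where uv: "u * p + v * q = 1" using bezout_int[of p q] cop by (auto simp: coprime_iff_gcd_eq_1)
  define m0 where "m0 = m u"
  have pu1: "p * u mod q = 1"
  proof -
    have "p * u mod q = 1 mod q" using uv by (metis add.commute mod_mult_self2 mult.commute)
    also have "1 mod q = 1" using qpos q1 by simp
    finally show ?thesis .
  qed
  have pu: "p * u = q * m0 + 1"
    unfolding m0_def m_def using div_mult_mod_eq[of "p * u" q] pu1 by (simp add: algebra_simps)
  have su: "m (u + d) - m u = m d"
  proof -
    note pu1
    moreover have "p * d mod q < q" "p * d mod q \<ge> 0" using qpos by auto
    ultimately have "\<not> p * u mod q + p * d mod q \<ge> q" using r' by linarith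
    then show ?thesis using m_shift[of u] by simp
  qed
  have sq: "m (q + d) - m q = m d" using m_add_q[of d] m_q by (simp add: add.commute)
  have key: "(of_int p * of_int u - of_int m0 * of_int q :: 'a) = 1"
  proof -
    have "p * u - m0 * q = 1" using pu by (simp add: algebra_simps)
    then have "(of_int (p * u - m0 * q) :: 'a) = 1" by simp
    then show ?thesis by simp
  qed
  show ?thesis
  proof (rule short_exact_intro)
    show "DerLogB kk B g \<subseteq> DerB kk B" by (auto simp: DerLogB_def)
    show "Cnd (\<lambda>_. 0) f" if "f \<in> Osec B g (m d)" for f using P1_s[OF that] .
  next
    fix \<alpha> assume C: "Cnd (\<lambda>_. 0) \<alpha>"
    have hu: "of_int u * \<alpha> * g powi m d \<in> B" using Cnd_zero_h[OF C, of u] su by simp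
    have hq: "of_int q * \<alpha> * g powi m d \<in> B" using Cnd_zero_h[OF C, of q] sq by simp
    have "of_int p * (of_int u * \<alpha> * g powi m d) - of_int m0 * (of_int q * \<alpha> * g powi m d) \<in> B"
      by (rule Bdiff[OF Bmult[OF B_of_int hu] Bmult[OF B_of_int hq]])
    also have "of_int p * (of_int u * \<alpha> * g powi m d) - of_int m0 * (of_int q * \<alpha> * g powi m d)
        = (of_int p * of_int u - of_int m0 * of_int q) * (\<alpha> * g powi m d)" by (simp add: algebra_simps)
    finally show "\<alpha> \<in> Osec B g (m d)" unfolding key by (simp add: Osec_def)
  next
    fix \<sigma> \<alpha> assume s: "isder \<sigma>" and C: "Cnd \<sigma> \<alpha>"
    let ?\<gamma> = "\<sigma> g / g"
    have hu: "(of_int u * \<alpha> - of_int m0 * ?\<gamma>) * g powi m d \<in> B" using Cnd_h[OF s C, of u] su by (simp add: m0_def)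
    have hq: "(of_int q * \<alpha> - of_int p * ?\<gamma>) * g powi m d \<in> B" using Cnd_h[OF s C, of q] sq m_q by simp
    have "of_int q * ((of_int u * \<alpha> - of_int m0 * ?\<gamma>) * g powi m d) - of_int u * ((of_int q * \<alpha> - of_int p * ?\<gamma>) * g powi m d) \<in> B"
      by (rule Bdiff[OF Bmult[OF B_of_int hu] Bmult[OF B_of_int hq]])
    also have "of_int q * ((of_int u * \<alpha> - of_int m0 * ?\<gamma>) * g powi m d) - of_int u * ((of_int q * \<alpha> - of_int p * ?\<gamma>) * g powi m d)
        = (of_int p * of_int u - of_int m0 * of_int q) * (?\<gamma> * g powi m d)" using g0 by (simp add: field_simps)
    finally have "?\<gamma> * g powi m d \<in> B" unfolding key by simp
    then show "(\<lambda>x. if x \<in> B then g powi m d * \<sigma> x else 0) \<in> DerLogB kk B g" by (rule theta_log[OF s C])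
  next
    fix \<theta> assume "\<theta> \<in> DerLogB kk B g"
    then show "\<exists>\<alpha>. Cnd (\<lambda>x. g powi (- m d) * \<theta> x) \<alpha>" using log_P3 by blast
  qed
qed

end

theorem proposition4p3:
  fixes kk B :: "'a::field set" and g :: 'a and p q d s :: int
  assumes "normal_affine_chart kk B"
    and "div_is_prime_divisor B g"
    and "coprime p q" and "q > 0"
    and "s = \<lfloor>(of_int (p * d) / of_int q :: rat)\<rfloor>"
  shows "((p * d) mod q = (- 1) mod q \<and> \<not> int CHAR('a) dvd q \<longrightarrow>
           short_exact B (Osec B g s) (DerA kk B g p q d) (twist g s (DerB kk B))
             (phiU B g p q d) (psiU B d))
       \<and> ((p * d) mod q = (- 1) mod q \<and> int CHAR('a) dvd q \<longrightarrow>
           short_exact B (Osec B g (s + 1)) (DerA kk B g p q d) (twist g s (DerLogB kk B g))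
             (phiU B g p q d) (psiU B d))
       \<and> (\<not> (p * d) mod q = (- 1) mod q \<longrightarrow>
           short_exact B (Osec B g s) (DerA kk B g p q d) (twist g s (DerLogB kk B g))
             (phiU B g p q d) (psiU B d))"
  proof -
  interpret stp kk B g p q d
    using assms(1,2,4) unfolding normal_affine_chart_def div_is_prime_divisor_def
    by unfold_locales auto
  have sd: "s = flr p q d" using assms(5) by (simp add: flr_def)
  show ?thesis unfolding sd using case1 case2 case3 assms(3) by blast
qed

end
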